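(* Let $\mathbf x_1,\ldots,\mathbf x_n\in\mathbb{R}^d\setminus\{\mathbf 0\}$, with $x_{ij}$ the $j$-th coordinate of $\mathbf x_i$, and suppose the probit likelihood $\ell(\beta)=\prod_{i=1}^n\Phi(\mathbf x_i^T\beta)$ has a unique global maximizer on $\mathbb{R}^d$. Let $\pi(\beta)\propto\ell(\beta)$ be the posterior under a flat prior. For $j=1,\ldots,d$ let $$z_j(\beta)=-\frac12\sum_{i=1}^n\frac{x_{ij}\,\phi(\mathbf x_i^T\beta)}{\Phi(\mathbf x_i^T\beta)}.$$ Then for every $\delta>0$ and every $j$, $\mathbb{E}_\pi[|z_j|^{2+\delta}]<\infty$.
   Context: $\Phi$ and $\phi$ denote the standard normal c.d.f. and density. The $z_j$ are the control variates $-\frac12\partial_{\beta_j}\ln\pi$ of the zero-variance method with linear trial polynomial. *)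

theory Defs
  imports "HOL-Probability.Probability"
begin

definition std_phi :: "real \<Rightarrow> real" where
  "std_phi t = std_normal_density t"

definition std_Phi :: "real \<Rightarrow> real" where
  "std_Phi x = (LBINT t:{..x}. std_normal_density t)"

definition probit_lik :: "nat \<Rightarrow> (nat \<Rightarrow> real ^ 'd) \<Rightarrow> real ^ 'd \<Rightarrow> real" where
  "probit_lik n x \<beta> = (\<Prod>i<n. std_Phi (x i \<bullet> \<beta>))"

definition zv_control :: "nat \<Rightarrow> (nat \<Rightarrow> real ^ 'd) \<Rightarrow> 'd \<Rightarrow> real ^ 'd \<Rightarrow> real" where
  "zv_control n x j \<beta> =
     - (1/2) * (\<Sum>i<n. (x i $ j) * std_phi (x i \<bullet> \<beta>) / std_Phi (x i \<bullet> \<beta>))"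

end

theory Submission
  imports Defs
begin


lemma Phi_alt: "std_Phi t = integral\<^sup>L lborel (\<lambda>u. indicator {..t} u * std_normal_density u)"
  unfolding std_Phi_def set_lebesgue_integral_def by simp

lemma int_ind_phi: "integrable lborel (\<lambda>u. indicator A u * normal_density m s u)" if "A \<in> sets borel" "0 < s"
proof -
  have "integrable lborel (\<lambda>x. indicator A x *\<^sub>R normal_density m s x)"
    by (rule integrable_mult_indicator) (use that in auto)
  then show ?thesis by simp
qed

lemma Phi_le1: "std_Phi t \<le> 1"
proof -
  have "std_Phi t \<le> integral\<^sup>L lborel std_normal_density"
    unfolding Phi_alt by (rule integral_mono[OF int_ind_phi]) (auto split: split_indicator)
  then show ?thesis by simp
qed

lemma Phi_mono: "s \<le> t \<Longrightarrow> std_Phi s \<le> std_Phi t"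
  unfolding Phi_alt by (rule integral_mono[OF int_ind_phi int_ind_phi]) (auto split: split_indicator)

lemma Phi_nonneg: "0 \<le> std_Phi t"
  unfolding Phi_alt by (rule integral_nonneg_AE) (auto split: split_indicator)

lemma pt_lower: fixes t u :: real
  assumes "t - 1/(1+\<bar>t\<bar>) \<le> u" "u \<le> t"
  shows "u\<^sup>2 \<le> t\<^sup>2 + 3"
proof -
  define h where "h = 1/(1+\<bar>t\<bar>)"
  have h0: "0 < h" "h \<le> 1" unfolding h_def by auto
  have th: "\<bar>t\<bar> * h \<le> 1" unfolding h_def by (simp add: field_simps)
  have "\<bar>u\<bar> \<le> \<bar>t\<bar> + h" using assms h_def by auto
  then have "\<bar>u\<bar>\<^sup>2 \<le> (\<bar>t\<bar> + h)\<^sup>2"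
    by (intro power_mono) auto
  then have "u\<^sup>2 \<le> (\<bar>t\<bar> + h)\<^sup>2" by simp
  also have "\<dots> = t\<^sup>2 + 2*(\<bar>t\<bar>*h) + h*h" by (simp add: power2_eq_square algebra_simps)
  also have "\<dots> \<le> t\<^sup>2 + 3" using th h0 mult_le_one[of h h] by auto
  finally show ?thesis .
qed

lemma Phi_lower: "std_Phi t \<ge> exp (-3/2) * std_normal_density t / (1 + \<bar>t\<bar>)"
proof -
  define h where "h = 1/(1+\<bar>t\<bar>)"
  define c where "c = exp (-3/2) * std_normal_density t"
  have h0: "0 < h" unfolding h_def by auto
  have "integral\<^sup>L lborel (\<lambda>u. indicator {t-h..t} u * c) \<le> std_Phi t"
    unfolding Phi_alt
  proof (rule integral_mono)
    show "integrable lborel (\<lambda>u. indicator {t - h..t} u * c)"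
      by (intro integrable_mult_left integrable_real_indicator) (auto simp: emeasure_lborel_Icc_eq)
    show "integrable lborel (\<lambda>u. indicator {..t} u * std_normal_density u)" by (rule int_ind_phi) simp_all
    fix u
    show "indicator {t - h..t} u * c \<le> indicator {..t} u * std_normal_density u"
    proof (cases "u \<in> {t-h..t}")
      case True
      then have "u\<^sup>2 \<le> t\<^sup>2 + 3" using pt_lower[of t u] h_def by auto
      then have "exp (-3/2) * exp (- t\<^sup>2/2) \<le> exp (- u\<^sup>2/2)"
        by (simp add: exp_add[symmetric])
      then have "c \<le> std_normal_density u" unfolding c_def std_normal_density_def
        using divide_right_mono by (simp add: mult.left_commute) fastforce
      then show ?thesis using True by auto
    qed auto
  qed
  moreover have "integral\<^sup>L lborel (\<lambda>u. indicator {t-h..t} u * c) = h * c"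
    using h0 by simp
  ultimately show ?thesis unfolding h_def c_def by simp
qed

lemma Phi_pos: "0 < std_Phi t"
  using Phi_lower[of t] normal_density_pos[of 1 0 t]
  by (smt (verit) divide_pos_pos exp_gt_zero mult_pos_pos)

lemma ratio_bound: "std_normal_density t / std_Phi t \<le> exp (3/2) * (1 + \<bar>t\<bar>)"
proof -
  have p: "0 < std_Phi t" by (rule Phi_pos)
  have "exp (-3/2) * std_normal_density t \<le> std_Phi t * (1 + \<bar>t\<bar>)"
    using Phi_lower[of t] by (simp add: field_simps)
  then have "std_normal_density t \<le> exp (3/2) * (std_Phi t * (1 + \<bar>t\<bar>))"
    by (simp add: exp_minus field_simps)
  then show ?thesis using p by (simp add: field_simps)
qed

lemma nd2: "sqrt 2 * e * normal_density 0 (sqrt 2) u = e * exp (- u\<^sup>2/4) / sqrt (2*pi)"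
proof -
  have s4: "sqrt (2 * pi * (sqrt 2)\<^sup>2) = sqrt 2 * sqrt (2 * pi)"
    by (simp add: real_sqrt_mult[symmetric])
  show ?thesis unfolding normal_density_def s4 by simp
qed

lemma sq_le: fixes s u :: real assumes "0 \<le> s" "u \<le> -s" shows "s\<^sup>2 \<le> u\<^sup>2"
proof -
  have "s\<^sup>2 \<le> (-u)\<^sup>2" using assms by (intro power_mono) auto
  then show ?thesis by simp
qed

lemma Phi_upper: assumes "0 \<le> s" shows "std_Phi (-s) \<le> sqrt 2 * exp (-s\<^sup>2/4)"
proof -
  define c where "c = sqrt 2 * exp (-s\<^sup>2/4)"
  have "std_Phi (-s) \<le> integral\<^sup>L lborel (\<lambda>u. c * normal_density 0 (sqrt 2) u)"
    unfolding Phi_alt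
  proof (rule integral_mono)
    show "integrable lborel (\<lambda>u. c * normal_density 0 (sqrt 2) u)"
      by (intro integrable_mult_right integrable_normal_density) simp
    show "integrable lborel (\<lambda>u. indicator {..-s} u * std_normal_density u)" by (rule int_ind_phi) simp_all
    fix u
    show "indicator {..-s} u * std_normal_density u \<le> c * normal_density 0 (sqrt 2) u"
    proof (cases "u \<le> -s")
      case True
      then have "s\<^sup>2 \<le> u\<^sup>2" using assms by (rule sq_le[rotated])
      then have "- u\<^sup>2/2 \<le> -s\<^sup>2/4 + - u\<^sup>2/4" by simp
      then have "exp (- u\<^sup>2/2) \<le> exp (-s\<^sup>2/4 + - u\<^sup>2/4)" by (rule exp_mono)
      then have e: "exp (- u\<^sup>2/2) \<le> exp (-s\<^sup>2/4) * exp (- u\<^sup>2/4)" by (simp only: exp_add)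
      have "std_normal_density u = exp (- u\<^sup>2/2) / sqrt (2*pi)" by (simp add: std_normal_density_def)
      also have "\<dots> \<le> exp (-s\<^sup>2/4) * exp (- u\<^sup>2/4) / sqrt (2*pi)"
        by (rule divide_right_mono[OF e]) simp
      also have "\<dots> = c * normal_density 0 (sqrt 2) u"
        unfolding c_def using nd2[of "exp (-s\<^sup>2/4)" u] by simp
      finally show ?thesis using True by simp
    next
      case False
      then show ?thesis by (simp add: c_def)
    qed
  qed
  also have "\<dots> = c" by simp
  finally show ?thesis by (simp add: c_def)
qed



lemma gauss1_eq: assumes "0 < c"
  shows "exp (- c * t\<^sup>2) = sqrt (pi / c) * normal_density 0 (sqrt (1/(2*c))) t"
  using assms unfolding normal_density_def
  by (simp add: real_sqrt_divide field_simps)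

lemma gauss1_int: assumes "0 < c" shows "integrable lborel (\<lambda>t::real. exp (- c * t\<^sup>2))"
  unfolding gauss1_eq[OF assms] using assms by (intro integrable_mult_right integrable_normal_density) simp

lemma gauss_nn: assumes "0 < c"
  shows "(\<integral>\<^sup>+t. ennreal (exp (- c * t\<^sup>2)) \<partial>lborel) = ennreal (integral\<^sup>L lborel (\<lambda>t::real. exp (- c * t\<^sup>2)))"
  by (rule nn_integral_eq_integral[OF gauss1_int[OF assms]]) simp

lemma gaussN_int: assumes "0 < c"
  shows "integrable lborel (\<lambda>x::'a::euclidean_space. exp (- c * (norm x)\<^sup>2))"
proof -
  have eq: "exp (- c * (norm x)\<^sup>2) = (\<Prod>b\<in>Basis. exp (- c * (x \<bullet> b)\<^sup>2))" for x :: 'a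
  proof -
    have "(norm x)\<^sup>2 = (\<Sum>b\<in>Basis. (x \<bullet> b)\<^sup>2)"
      unfolding power2_norm_eq_inner by (subst euclidean_inner) (simp add: power2_eq_square)
    then show ?thesis by (simp add: sum_distrib_left exp_sum)
  qed
  have "(\<integral>\<^sup>+x. ennreal (exp (- c * (norm x)\<^sup>2)) \<partial>(lborel::'a measure))
      = (\<integral>\<^sup>+x. (\<Prod>b\<in>Basis. ennreal (exp (- c * (x \<bullet> b)\<^sup>2))) \<partial>(lborel::'a measure))"
    unfolding eq by (subst prod_ennreal) auto
  also have "\<dots> = (\<Prod>b\<in>(Basis::'a set). (\<integral>\<^sup>+t. ennreal (exp (- c * t\<^sup>2)) \<partial>lborel))"
    by (rule nn_integral_lborel_prod[where f="\<lambda>b t. ennreal (exp (- c * t\<^sup>2))"]) auto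
  also have "\<dots> = ennreal (\<Prod>b\<in>(Basis::'a set). integral\<^sup>L lborel (\<lambda>t::real. exp (- c * t\<^sup>2)))"
    unfolding gauss_nn[OF assms]
    by (rule prod_ennreal) (auto intro!: integral_nonneg_AE)
  also have "\<dots> < \<infinity>" by simp
  finally show ?thesis
    by (intro integrableI_nonneg) auto
qed



lemma Phi_meas[measurable]: "std_Phi \<in> borel_measurable borel"
  by (rule borel_measurable_mono) (auto simp: mono_def Phi_mono)

lemma phi_meas[measurable]: "std_phi \<in> borel_measurable borel"
  unfolding std_phi_def[abs_def] by measurable

lemma integrand_meas:
  "(\<lambda>\<beta>. \<bar>zv_control n x j \<beta>\<bar> powr (p::real) * probit_lik n x \<beta>) \<in> borel_measurable lborel"
  unfolding zv_control_def probit_lik_def by measurable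



lemma separation:
  fixes x :: "nat \<Rightarrow> real ^ 'd"
  assumes unique_max: "\<exists>!b. \<forall>\<beta>. probit_lik n x \<beta> \<le> probit_lik n x b"
    and u: "u \<noteq> 0"
  shows "\<exists>i<n. x i \<bullet> u < 0"
proof (rule ccontr)
  assume "\<not> ?thesis"
  then have nn: "\<And>i. i < n \<Longrightarrow> 0 \<le> x i \<bullet> u" by (auto simp: not_less) (meson leD)
  obtain b where b: "\<forall>\<beta>. probit_lik n x \<beta> \<le> probit_lik n x b"
    and uq: "\<And>b'. \<forall>\<beta>. probit_lik n x \<beta> \<le> probit_lik n x b' \<Longrightarrow> b' = b"
    using unique_max by blast
  have "probit_lik n x b \<le> probit_lik n x (b + u)"
    unfolding probit_lik_def
    by (rule prod_mono) (auto simp: Phi_nonneg inner_add_right intro!: Phi_mono nn)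
  then have "\<forall>\<beta>. probit_lik n x \<beta> \<le> probit_lik n x (b + u)" using b by (meson order_trans)
  then have "b + u = b" by (rule uq)
  then show False using u by simp
qed

lemma uniform_sep:
  fixes x :: "nat \<Rightarrow> real ^ 'd"
  assumes unique_max: "\<exists>!b. \<forall>\<beta>. probit_lik n x \<beta> \<le> probit_lik n x b"
  shows "\<exists>c>0. \<forall>\<beta>. \<exists>i<n. x i \<bullet> \<beta> \<le> - c * norm \<beta>"
proof -
  define F where "F u = (\<Sum>i<n. min 0 (x i \<bullet> u))" for u :: "real ^ 'd"
  define S where "S = sphere (0::real ^ 'd) 1"
  have cS: "compact S" unfolding S_def by simp
  have neS: "S \<noteq> {}" unfolding S_def by simp
  have cF: "continuous_on S F" unfolding F_def by (intro continuous_intros)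
  obtain u0 where u0: "u0 \<in> S" and mx: "\<And>y. y \<in> S \<Longrightarrow> F y \<le> F u0"
    using continuous_attains_sup[OF cS neS cF] by blast
  have "u0 \<noteq> 0" using u0 unfolding S_def by auto
  then obtain i0 where i0: "i0 < n" "x i0 \<bullet> u0 < 0" using separation[OF unique_max] by blast
  then have npos: "0 < n" by simp
  have "F u0 \<le> min 0 (x i0 \<bullet> u0)"
  proof -
    have "- min 0 (x i0 \<bullet> u0) \<le> (\<Sum>i<n. - min 0 (x i \<bullet> u0))"
      by (rule member_le_sum) (use i0 in auto)
    then show ?thesis unfolding F_def by (simp add: sum_negf)
  qed
  then have Fneg: "F u0 < 0" using i0 by simp
  define c where "c = - F u0 / n"
  have cpos: "0 < c" unfolding c_def using Fneg npos by (simp add: divide_neg_pos)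
  have unit: "\<exists>i<n. x i \<bullet> u \<le> - c" if "norm u = 1" for u
  proof (rule ccontr)
    assume "\<not> ?thesis"
    then have gt: "\<And>i. i < n \<Longrightarrow> - c < min 0 (x i \<bullet> u)" using cpos by force
    have "(\<Sum>i<n. - c) < F u"
      unfolding F_def by (rule sum_strict_mono) (use gt npos in auto)
    moreover have "(\<Sum>i<n. - c) = F u0" unfolding c_def using npos by simp
    moreover have "F u \<le> F u0" using mx that unfolding S_def by simp
    ultimately show False by simp
  qed
  have "\<exists>i<n. x i \<bullet> \<beta> \<le> - c * norm \<beta>" for \<beta>
  proof (cases "\<beta> = 0")
    case True then show ?thesis using npos by auto
  next
    case False
    define u where "u = \<beta> /\<^sub>R norm \<beta>"
    have "norm u = 1" using False unfolding u_def by simp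
    then obtain i where i: "i < n" "x i \<bullet> u \<le> - c" using unit by blast
    have "\<beta> = norm \<beta> *\<^sub>R u" using False unfolding u_def by simp
    then have "x i \<bullet> \<beta> = norm \<beta> * (x i \<bullet> u)" by (metis inner_scaleR_right)
    also have "\<dots> \<le> norm \<beta> * (- c)" using i by (intro mult_left_mono) auto
    finally show ?thesis using i by (auto simp: mult.commute)
  qed
  then show ?thesis using cpos by blast
qed



lemma lik_bound:
  fixes x :: "nat \<Rightarrow> real ^ 'd"
  assumes "i < n" "x i \<bullet> \<beta> \<le> - c * norm \<beta>" "0 < c"
  shows "probit_lik n x \<beta> \<le> sqrt 2 * exp (- (c * norm \<beta>)\<^sup>2 / 4)"
proof -
  have "probit_lik n x \<beta> = std_Phi (x i \<bullet> \<beta>) * (\<Prod>k\<in>{..<n}-{i}. std_Phi (x k \<bullet> \<beta>))"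
    unfolding probit_lik_def using assms(1) by (subst prod.remove[of _ i]) auto
  also have "\<dots> \<le> std_Phi (x i \<bullet> \<beta>) * 1"
    by (intro mult_left_mono prod_le_1) (auto simp: Phi_nonneg Phi_le1)
  also have "\<dots> \<le> std_Phi (- (c * norm \<beta>))" using assms(2) by (simp add: Phi_mono)
  also have "\<dots> \<le> sqrt 2 * exp (- (c * norm \<beta>)\<^sup>2 / 4)" using assms(3) by (intro Phi_upper) simp
  finally show ?thesis .
qed

lemma z_bound:
  fixes x :: "nat \<Rightarrow> real ^ 'd"
  shows "\<bar>zv_control n x j \<beta>\<bar> \<le> (\<Sum>i<n. \<bar>x i $ j\<bar> * exp (3/2) * (1 + norm (x i))) * (1 + norm \<beta>)"
proof -
  have trm: "\<bar>(x i $ j) * std_phi (x i \<bullet> \<beta>) / std_Phi (x i \<bullet> \<beta>)\<bar>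
      \<le> \<bar>x i $ j\<bar> * exp (3/2) * (1 + norm (x i)) * (1 + norm \<beta>)" for i
  proof -
    let ?t = "x i \<bullet> \<beta>"
    have r0: "0 \<le> std_phi ?t / std_Phi ?t" using Phi_pos[of ?t] by (simp add: std_phi_def)
    have "\<bar>?t\<bar> \<le> norm (x i) * norm \<beta>" by (rule Cauchy_Schwarz_ineq2)
    then have tb: "1 + \<bar>?t\<bar> \<le> (1 + norm (x i)) * (1 + norm \<beta>)"
      by (simp add: algebra_simps) (smt (verit) norm_ge_zero)
    have "std_phi ?t / std_Phi ?t \<le> exp (3/2) * (1 + \<bar>?t\<bar>)"
      using ratio_bound[of ?t] by (simp add: std_phi_def)
    also have "\<dots> \<le> exp (3/2) * ((1 + norm (x i)) * (1 + norm \<beta>))"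
      using tb by (intro mult_left_mono) auto
    finally have rb: "std_phi ?t / std_Phi ?t \<le> exp (3/2) * ((1 + norm (x i)) * (1 + norm \<beta>))" .
    have "\<bar>(x i $ j) * std_phi ?t / std_Phi ?t\<bar> = \<bar>x i $ j\<bar> * (std_phi ?t / std_Phi ?t)"
      using Phi_pos[of ?t] by (simp add: abs_mult std_phi_def)
    also have "\<dots> \<le> \<bar>x i $ j\<bar> * (exp (3/2) * ((1 + norm (x i)) * (1 + norm \<beta>)))"
      using rb by (intro mult_left_mono) auto
    finally show ?thesis by (simp add: mult.assoc)
  qed
  have "\<bar>zv_control n x j \<beta>\<bar> = (1/2) * \<bar>\<Sum>i<n. (x i $ j) * std_phi (x i \<bullet> \<beta>) / std_Phi (x i \<bullet> \<beta>)\<bar>"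
    unfolding zv_control_def by (simp add: abs_mult)
  also have "\<dots> \<le> \<bar>\<Sum>i<n. (x i $ j) * std_phi (x i \<bullet> \<beta>) / std_Phi (x i \<bullet> \<beta>)\<bar>" by simp
  also have "\<dots> \<le> (\<Sum>i<n. \<bar>(x i $ j) * std_phi (x i \<bullet> \<beta>) / std_Phi (x i \<bullet> \<beta>)\<bar>)" by (rule sum_abs)
  also have "\<dots> \<le> (\<Sum>i<n. \<bar>x i $ j\<bar> * exp (3/2) * (1 + norm (x i)) * (1 + norm \<beta>))"
    by (rule sum_mono) (rule trm)
  also have "\<dots> = (\<Sum>i<n. \<bar>x i $ j\<bar> * exp (3/2) * (1 + norm (x i))) * (1 + norm \<beta>)"
    by (simp add: sum_distrib_right)
  finally show ?thesis .
qed

lemma poly_exp: fixes r p a :: real assumes "0 \<le> r" "0 \<le> p" "0 < a"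
  shows "(1 + r) powr p \<le> exp (p\<^sup>2 / (2*a)) * exp (a * r\<^sup>2 / 2)"
proof -
  have "(1 + r) powr p = exp (p * ln (1 + r))"
  proof -
    have "0 < 1 + r" using assms by linarith
    then show ?thesis by (simp add: powr_def)
  qed
  also have "\<dots> \<le> exp (p * r)"
    using assms by (simp add: mult_left_mono ln_add_one_self_le_self)
  also have "p * r \<le> p\<^sup>2 / (2*a) + a * r\<^sup>2 / 2"
  proof -
    have "0 \<le> (a * r - p)\<^sup>2" by simp
    then have "2 * a * (p * r) \<le> p\<^sup>2 + a\<^sup>2 * r\<^sup>2" by (simp add: power2_eq_square algebra_simps)
    then show ?thesis using assms by (simp add: field_simps power2_eq_square)
  qed
  then have "exp (p * r) \<le> exp (p\<^sup>2 / (2*a) + a * r\<^sup>2 / 2)" by simp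
  finally show ?thesis by (simp add: exp_add)
qed



theorem mainTheorem6:
  fixes n :: nat and x :: "nat \<Rightarrow> real ^ 'd" and \<delta> :: real and j :: 'd
  assumes nonzero: "\<And>i. i < n \<Longrightarrow> x i \<noteq> 0"
    and unique_max: "\<exists>!b. \<forall>\<beta>. probit_lik n x \<beta> \<le> probit_lik n x b"
    and delta_pos: "\<delta> > 0"
  shows "integrable lborel
           (\<lambda>\<beta>. \<bar>zv_control n x j \<beta>\<bar> powr (2 + \<delta>) * probit_lik n x \<beta>)"
proof -
  obtain c where c: "0 < c" and sep: "\<And>\<beta>. \<exists>i<n. x i \<bullet> \<beta> \<le> - c * norm \<beta>"
    using uniform_sep[OF unique_max] by blast
  define p where "p = 2 + \<delta>"
  define K where "K = (\<Sum>i<n. \<bar>x i $ j\<bar> * exp (3/2) * (1 + norm (x i)))"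
  define a where "a = c\<^sup>2 / 4"
  define E where "E = exp (p\<^sup>2 / (2*a))"
  have p0: "0 \<le> p" using delta_pos p_def by simp
  have a0: "0 < a" unfolding a_def using c by (simp add: zero_less_power)
  have K0: "0 \<le> K" unfolding K_def by (intro sum_nonneg) auto
  define C where "C = K powr p * E * sqrt 2"
  have bound: "\<bar>zv_control n x j \<beta>\<bar> powr p * probit_lik n x \<beta> \<le> C * exp (- (a/2) * (norm \<beta>)\<^sup>2)"
    for \<beta> :: "real ^ 'd"
  proof -
    let ?r = "norm \<beta>"
    obtain i where i: "i < n" "x i \<bullet> \<beta> \<le> - c * ?r" using sep by blast
    have l: "probit_lik n x \<beta> \<le> sqrt 2 * exp (- a * ?r\<^sup>2)"
      using lik_bound[of i n x \<beta> c, OF i c] unfolding a_def by (simp add: power_mult_distrib)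
    have l0: "0 \<le> probit_lik n x \<beta>" unfolding probit_lik_def by (auto intro!: prod_nonneg Phi_nonneg)
    have "\<bar>zv_control n x j \<beta>\<bar> powr p \<le> (K * (1 + ?r)) powr p"
      using z_bound[of n x j \<beta>] p0 unfolding K_def by (intro powr_mono2) auto
    also have "\<dots> = K powr p * (1 + ?r) powr p" using K0 by (simp add: powr_mult)
    also have "\<dots> \<le> K powr p * (E * exp (a * ?r\<^sup>2 / 2))"
      using poly_exp[of ?r p a] p0 a0 unfolding E_def by (intro mult_left_mono) auto
    finally have zb: "\<bar>zv_control n x j \<beta>\<bar> powr p \<le> K powr p * (E * exp (a * ?r\<^sup>2 / 2))" .
    have "\<bar>zv_control n x j \<beta>\<bar> powr p * probit_lik n x \<beta>
        \<le> (K powr p * (E * exp (a * ?r\<^sup>2 / 2))) * (sqrt 2 * exp (- a * ?r\<^sup>2))"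
      using zb l l0 by (intro mult_mono) (auto simp: E_def)
    also have "\<dots> = C * (exp (a * ?r\<^sup>2 / 2) * exp (- a * ?r\<^sup>2))" unfolding C_def by simp
    also have "exp (a * ?r\<^sup>2 / 2) * exp (- a * ?r\<^sup>2) = exp (- (a/2) * ?r\<^sup>2)"
      by (simp add: exp_add[symmetric])
    finally show ?thesis .
  qed
  have int: "integrable lborel (\<lambda>\<beta>::real ^ 'd. C * exp (- (a/2) * (norm \<beta>)\<^sup>2))"
    using gaussN_int[of "a/2"] a0 by (intro integrable_mult_right) simp
  show ?thesis unfolding p_def[symmetric]
  proof (rule Bochner_Integration.integrable_bound[OF int integrand_meas])
    show "AE \<beta> in lborel. norm (\<bar>zv_control n x j \<beta>\<bar> powr p * probit_lik n x \<beta>)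
        \<le> norm (C * exp (- (a/2) * (norm \<beta>)\<^sup>2))"
    proof (rule AE_I2)
      fix \<beta> :: "real ^ 'd"
      have l0: "0 \<le> probit_lik n x \<beta>" unfolding probit_lik_def by (auto intro!: prod_nonneg Phi_nonneg)
      have "0 \<le> \<bar>zv_control n x j \<beta>\<bar> powr p * probit_lik n x \<beta>" using l0 by simp
      then show "norm (\<bar>zv_control n x j \<beta>\<bar> powr p * probit_lik n x \<beta>)
        \<le> norm (C * exp (- (a/2) * (norm \<beta>)\<^sup>2))"
        using bound[of \<beta>] by simp
    qed
  qed
qed

end
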